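(* Let $S_1,S_2\subseteq\Omega=\{0,\dots,D-1\}$ be nonempty sets with resemblance $R=\frac{|S_1\cap S_2|}{|S_1\cup S_2|}$, and fix integers $b\ge1$, $k\ge1$, $m\ge1$. Apply $k$ independent uniformly random permutations $\pi_1,\dots,\pi_k$ of $\Omega$; for each $j$ record the lowest $b$ bits of $\min\pi_j(S_1)$ and of $\min\pi_j(S_2)$, and let $T$ be the number of $j\in\{1,\dots,k\}$ for which these $b$-bit values coincide, so that $T$ is Binomial$(k,P_b)$ where $P_b$ is the probability that the lowest $b$ bits of $\min\pi(S_1)$ and $\min\pi(S_2)$ agree. Assume $P_b=C_{1,b}+(1-C_{2,b})R$ with $C_{2,b}\ne1$, where $r_1=|S_1|/D$, $r_2=|S_2|/D$, $A_{l,b}=\frac{r_l(1-r_l)^{2^b-1}}{1-(1-r_l)^{2^b}}$ ($l=1,2$), $C_{1,b}=A_{1,b}\frac{r_2}{r_1+r_2}+A_{2,b}\frac{r_1}{r_1+r_2}$, $C_{2,b}=A_{1,b}\frac{r_1}{r_1+r_2}+A_{2,b}\frac{r_2}{r_1+r_2}$. Expand the $b$-bit values of $S_1$ (resp. $S_2$) into a binary vector $x_1$ (resp. $x_2$) of length $2^bk$ consisting of $k$ consecutive blocks of length $2^b$, where block $j$ is the indicator vector of the $b$-bit value obtained from $\pi_j$; thus each $x_l$ has exactly $k$ ones and $\langle x_1,x_2\rangle=T$. Apply to $x_1,x_2$ the VW hashing with $m$ buckets and $s=1$, independently of the permutations: with i.i.d. uniform $h(i)\in\{1,\dots,m\}$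 and i.i.d. $r_i$ uniform on $\{-1,1\}$, set $g_{l,q}=\sum_i x_{l,i}r_i1\{h(i)=q\}$, $\hat T=\sum_{q=1}^m g_{1,q}g_{2,q}$, and $$\hat R_{b,vw}=\frac{\hat T/k-C_{1,b}}{1-C_{2,b}}.$$ Then $E(\hat R_{b,vw})=R$ and $$\mathrm{Var}(\hat R_{b,vw})=\frac1k\frac{P_b(1-P_b)}{[1-C_{2,b}]^2}+\frac1m\frac{1}{[1-C_{2,b}]^2}\left(1+P_b^2-\frac{P_b(1+P_b)}{k}\right).$$
   Context: The first term $\frac1k\frac{P_b(1-P_b)}{[1-C_{2,b}]^2}$ is the variance of the $b$-bit minwise hashing estimator $\hat R_b=\frac{T/k-C_{1,b}}{1-C_{2,b}}$. The relation $P_b=C_{1,b}+(1-C_{2,b})R$ is the (large-$D$) expression for the $b$-bit collision probability used throughout the paper. *)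

theory Defs
  imports "HOL-Probability.Probability"
begin

definition perm_set :: "nat \<Rightarrow> (nat \<Rightarrow> nat) set" where
  "perm_set D = {p. p permutes {..<D}}"

definition bbit :: "nat \<Rightarrow> nat set \<Rightarrow> (nat \<Rightarrow> nat) \<Rightarrow> nat" where
  "bbit b S p = Min (p ` S) mod 2 ^ b"

definition resemblance :: "nat set \<Rightarrow> nat set \<Rightarrow> real" where
  "resemblance S1 S2 = real (card (S1 \<inter> S2)) / real (card (S1 \<union> S2))"

definition Pb :: "nat \<Rightarrow> nat \<Rightarrow> nat set \<Rightarrow> nat set \<Rightarrow> real" where
  "Pb D b S1 S2 = measure_pmf.prob (pmf_of_set (perm_set D)) {p. bbit b S1 p = bbit b S2 p}"

definition A_coef :: "nat \<Rightarrow> real \<Rightarrow> real" where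
  "A_coef b r = r * (1 - r) ^ (2 ^ b - 1) / (1 - (1 - r) ^ (2 ^ b))"

definition C1b :: "nat \<Rightarrow> nat \<Rightarrow> nat set \<Rightarrow> nat set \<Rightarrow> real" where
  "C1b D b S1 S2 = (let r1 = real (card S1) / real D; r2 = real (card S2) / real D in
     A_coef b r1 * (r2 / (r1 + r2)) + A_coef b r2 * (r1 / (r1 + r2)))"

definition C2b :: "nat \<Rightarrow> nat \<Rightarrow> nat set \<Rightarrow> nat set \<Rightarrow> real" where
  "C2b D b S1 S2 = (let r1 = real (card S1) / real D; r2 = real (card S2) / real D in
     A_coef b r1 * (r1 / (r1 + r2)) + A_coef b r2 * (r2 / (r1 + r2)))"

text \<open>Joint sample space: k permutations (indexed 0..k-1), bucket function h on
  the 2^b k coordinates (values 1..m), and Rademacher signs r on the coordinates;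
  all independent and uniform (uniform on the product set).\<close>
definition sample_space :: "nat \<Rightarrow> nat \<Rightarrow> nat \<Rightarrow> nat \<Rightarrow>
    ((nat \<Rightarrow> (nat \<Rightarrow> nat)) \<times> (nat \<Rightarrow> nat) \<times> (nat \<Rightarrow> real)) set" where
  "sample_space D b k m =
     (PiE {..<k} (\<lambda>_. perm_set D)) \<times> (PiE {..<2 ^ b * k} (\<lambda>_. {1..m}))
       \<times> (PiE {..<2 ^ b * k} (\<lambda>_. {-1, 1}))"

definition xvec :: "nat \<Rightarrow> nat set \<Rightarrow> (nat \<Rightarrow> (nat \<Rightarrow> nat)) \<Rightarrow> nat \<Rightarrow> real" where
  "xvec b S ps i = (if bbit b S (ps (i div 2 ^ b)) = i mod 2 ^ b then 1 else 0)"

definition gvw :: "nat \<Rightarrow> nat \<Rightarrow> nat set \<Rightarrow> (nat \<Rightarrow> (nat \<Rightarrow> nat)) \<Rightarrow> (nat \<Rightarrow> nat)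
    \<Rightarrow> (nat \<Rightarrow> real) \<Rightarrow> nat \<Rightarrow> real" where
  "gvw b k S ps h r q = (\<Sum>i<2 ^ b * k. xvec b S ps i * r i * (if h i = q then 1 else 0))"

definition That_vw :: "nat \<Rightarrow> nat \<Rightarrow> nat \<Rightarrow> nat set \<Rightarrow> nat set \<Rightarrow>
    ((nat \<Rightarrow> (nat \<Rightarrow> nat)) \<times> (nat \<Rightarrow> nat) \<times> (nat \<Rightarrow> real)) \<Rightarrow> real" where
  "That_vw b k m S1 S2 \<omega> = (case \<omega> of (ps, h, r) \<Rightarrow>
     (\<Sum>q\<in>{1..m}. gvw b k S1 ps h r q * gvw b k S2 ps h r q))"

definition Rhat_bvw :: "nat \<Rightarrow> nat \<Rightarrow> nat \<Rightarrow> nat \<Rightarrow> nat set \<Rightarrow> nat set \<Rightarrow>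
    ((nat \<Rightarrow> (nat \<Rightarrow> nat)) \<times> (nat \<Rightarrow> nat) \<times> (nat \<Rightarrow> real)) \<Rightarrow> real" where
  "Rhat_bvw D b k m S1 S2 \<omega> =
     (That_vw b k m S1 S2 \<omega> / real k - C1b D b S1 S2) / (1 - C2b D b S1 S2)"

end

theory Submission
  imports Defs
begin


lemma flip_zero:
  fixes F :: "('a \<Rightarrow> real) \<Rightarrow> real"
  assumes fin: "finite I" and i: "i \<in> I"
    and F: "\<And>r. r \<in> PiE I (\<lambda>_. {-1,1::real}) \<Longrightarrow> F (r(i := - r i)) = - F r"
  shows "(\<Sum>r\<in>PiE I (\<lambda>_. {-1,1::real}). F r) = 0"
proof -
  let ?S = "PiE I (\<lambda>_. {-1,1::real})"
  let ?fl = "\<lambda>r::'a\<Rightarrow>real. r(i := - r i)"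
  have "(\<Sum>r\<in>?S. F r) = (\<Sum>r\<in>?S. F (?fl r))"
    by (rule sum.reindex_bij_witness[where i="?fl" and j="?fl"]) (auto simp: PiE_iff i extensional_def)
  also have "\<dots> = - (\<Sum>r\<in>?S. F r)" using F by (simp add: sum_negf)
  finally show ?thesis by simp
qed

lemma sign2:
  assumes "finite I" "i \<in> I" "j \<in> I" "i \<noteq> j"
  shows "(\<Sum>r\<in>PiE I (\<lambda>_. {-1,1::real}). r i * r j) = 0"
  by (rule flip_zero[OF assms(1,2)]) (use assms in auto)

lemma sq_sign: "r \<in> PiE I (\<lambda>_. {-1,1::real}) \<Longrightarrow> i \<in> I \<Longrightarrow> r i * r i = 1"
  by (auto simp: PiE_iff)

lemma sign4:
  assumes fin: "finite I" and I: "i \<in> I" "j \<in> I" "i' \<in> I" "j' \<in> I" and ne: "i \<noteq> j" "i' \<noteq> j'"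
  shows "(\<Sum>r\<in>PiE I (\<lambda>_. {-1,1::real}). r i * r j * (r i' * r j')) =
     real (card (PiE I (\<lambda>_. {-1,1::real}))) * ((if i = i' \<and> j = j' then 1 else 0) + (if i = j' \<and> j = i' then 1 else 0))"
proof (cases "i = i' \<and> j = j'")
  case True
  have "(\<Sum>r\<in>PiE I (\<lambda>_. {-1,1::real}). r i * r j * (r i' * r j')) = (\<Sum>r\<in>PiE I (\<lambda>_. {-1,1::real}). 1)"
    apply (rule sum.cong[OF refl])
    using True sq_sign[OF _ I(1)] sq_sign[OF _ I(2)] by (metis mult.commute mult.left_commute mult_1)
  then show ?thesis using True ne by simp
next
  case F1: False
  show ?thesis
  proof (cases "i = j' \<and> j = i'")
    case True
    have "(\<Sum>r\<in>PiE I (\<lambda>_. {-1,1::real}). r i * r j * (r i' * r j')) = (\<Sum>r\<in>PiE I (\<lambda>_. {-1,1::real}). 1)"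
      apply (rule sum.cong[OF refl])
      using True sq_sign[OF _ I(1)] sq_sign[OF _ I(2)] by (metis mult.commute mult.left_commute mult_1)
    then show ?thesis using True ne by simp
  next
    case False
    show ?thesis
    proof (cases "i \<noteq> i' \<and> i \<noteq> j'")
      case True
      then show ?thesis using F1 False
        by (simp, intro flip_zero[OF fin I(1)]) (use ne in auto)
    next
      case False2: False
      then have "j \<noteq> i' \<and> j \<noteq> j'" using F1 False ne by auto
      then show ?thesis using F1 False
        by (simp, intro flip_zero[OF fin I(2)]) (use ne in auto)
    qed
  qed
qed

lemma hpair:
  fixes m :: nat
  assumes fin: "finite I" and I: "i \<in> I" "j \<in> I" and ne: "i \<noteq> j"
  shows "(\<Sum>h\<in>PiE I (\<lambda>_. {1..m}). (if h i = h j then 1 else 0::real)) = real m ^ (card I - 1)"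
proof -
  let ?H = "PiE I (\<lambda>_. {1..m})"
  let ?f = "\<lambda>q l (v::nat). if l = i \<or> l = j then (if v = q then 1 else 0::real) else 1"
  have "(\<Sum>h\<in>?H. (if h i = h j then 1 else 0::real)) = (\<Sum>h\<in>?H. \<Sum>q\<in>{1..m}. \<Prod>l\<in>I. ?f q l (h l))"
  proof (rule sum.cong[OF refl])
    fix h assume h: "h \<in> ?H"
    have p: "(\<Prod>l\<in>I. ?f q l (h l)) = (if h i = q then 1 else 0) * (if h j = q then 1 else 0)" for q
    proof -
      have "(\<Prod>l\<in>I. ?f q l (h l)) = ?f q i (h i) * (\<Prod>l\<in>I - {i}. ?f q l (h l))"
        using fin I by (simp add: prod.remove)
      also have "(\<Prod>l\<in>I - {i}. ?f q l (h l)) = ?f q j (h j) * (\<Prod>l\<in>I - {i} - {j}. ?f q l (h l))"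
        using fin I ne by (simp add: prod.remove)
      also have "(\<Prod>l\<in>I - {i} - {j}. ?f q l (h l)) = 1"
        by (rule prod.neutral) auto
      finally show ?thesis by simp
    qed
    have hi: "h i \<in> {1..m}" using h I by auto
    show "(if h i = h j then 1 else 0::real) = (\<Sum>q\<in>{1..m}. \<Prod>l\<in>I. ?f q l (h l))"
      unfolding p using hi
      by (auto simp: if_distrib[of "\<lambda>x. x * _"] sum.If_cases cong: if_cong)
  qed
  also have "\<dots> = (\<Sum>q\<in>{1..m}. \<Sum>h\<in>?H. \<Prod>l\<in>I. ?f q l (h l))"
    by (rule sum.swap)
  also have "\<dots> = (\<Sum>q\<in>{1..m}. \<Prod>l\<in>I. \<Sum>v\<in>{1..m}. ?f q l v)"
    by (rule sum.cong[OF refl], rule prod_sum_PiE[symmetric]) (use fin in auto)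
  also have "\<dots> = (\<Sum>q\<in>{1..m}. \<Prod>l\<in>I. (if l = i \<or> l = j then 1 else real m))"
    by (rule sum.cong[OF refl], rule prod.cong[OF refl]) auto
  also have "\<dots> = (\<Sum>q\<in>{1..m}. real m ^ (card I - 2))"
  proof -
    have "(\<Prod>l\<in>I. (if l = i \<or> l = j then 1 else real m)) = (\<Prod>l\<in>I - {i,j}. real m)"
      using fin by (intro prod.mono_neutral_cong_right) auto
    also have "\<dots> = real m ^ (card I - 2)" using fin I ne by (simp add: card_Diff_subset numeral_2_eq_2)
    finally show ?thesis by simp
  qed
  also have "\<dots> = real m ^ (card I - 1)"
  proof -
    have "card I \<ge> 2" using fin I ne
      by (metis card_2_iff card_mono empty_subsetI insert_subset)
    then have "card I - 1 = Suc (card I - 2)" by simp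
    then show ?thesis by simp
  qed
  finally show ?thesis .
qed

definition Gz :: "(nat \<times> nat \<Rightarrow> real) \<Rightarrow> nat \<times> nat \<Rightarrow> (nat \<Rightarrow> real) \<Rightarrow> real" where
  "Gz w p r = (if fst p = snd p then 0 else w p * r (fst p) * r (snd p))"

lemma Zr1:
  assumes fin: "finite I"
  shows "(\<Sum>r\<in>PiE I (\<lambda>_. {-1,1::real}). \<Sum>p\<in>I \<times> I. Gz w p r) = 0"
proof -
  have "(\<Sum>r\<in>PiE I (\<lambda>_. {-1,1::real}). \<Sum>p\<in>I \<times> I. Gz w p r)
      = (\<Sum>p\<in>I \<times> I. \<Sum>r\<in>PiE I (\<lambda>_. {-1,1::real}). Gz w p r)" by (rule sum.swap)
  also have "\<dots> = 0"
  proof (rule sum.neutral, rule ballI)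
    fix p assume p: "p \<in> I \<times> I"
    show "(\<Sum>r\<in>PiE I (\<lambda>_. {-1,1::real}). Gz w p r) = 0"
    proof (cases "fst p = snd p")
      case True then show ?thesis by (simp add: Gz_def)
    next
      case False
      have "(\<Sum>r\<in>PiE I (\<lambda>_. {-1,1::real}). Gz w p r) = w p * (\<Sum>r\<in>PiE I (\<lambda>_. {-1,1::real}). r (fst p) * r (snd p))"
        using False by (simp add: Gz_def sum_distrib_left mult.assoc)
      also have "\<dots> = 0" using sign2[OF fin, of "fst p" "snd p"] p False by auto
      finally show ?thesis .
    qed
  qed
  finally show ?thesis .
qed

lemma Zr2:
  assumes fin: "finite I"
  shows "(\<Sum>r\<in>PiE I (\<lambda>_. {-1,1::real}). (\<Sum>p\<in>I \<times> I. Gz w p r)^2) =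
    real (card (PiE I (\<lambda>_. {-1,1::real}))) * (\<Sum>p\<in>I \<times> I. if fst p = snd p then 0 else w p * (w p + w (snd p, fst p)))"
proof -
  let ?S = "PiE I (\<lambda>_. {-1,1::real})"
  let ?c = "real (card ?S)"
  have "(\<Sum>r\<in>?S. (\<Sum>p\<in>I \<times> I. Gz w p r)^2) = (\<Sum>r\<in>?S. \<Sum>p\<in>I \<times> I. \<Sum>p'\<in>I \<times> I. Gz w p r * Gz w p' r)"
    by (simp add: power2_eq_square sum_product)
  also have "\<dots> = (\<Sum>p\<in>I \<times> I. \<Sum>r\<in>?S. \<Sum>p'\<in>I \<times> I. Gz w p r * Gz w p' r)" by (rule sum.swap)
  also have "\<dots> = (\<Sum>p\<in>I \<times> I. \<Sum>p'\<in>I \<times> I. \<Sum>r\<in>?S. Gz w p r * Gz w p' r)"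
    by (rule sum.cong[OF refl], rule sum.swap)
  also have "\<dots> = (\<Sum>p\<in>I \<times> I. if fst p = snd p then 0 else w p * (w p + w (snd p, fst p)) * ?c)"
  proof (rule sum.cong[OF refl])
    fix p assume p: "p \<in> I \<times> I"
    show "(\<Sum>p'\<in>I \<times> I. \<Sum>r\<in>?S. Gz w p r * Gz w p' r) = (if fst p = snd p then 0 else w p * (w p + w (snd p, fst p)) * ?c)"
    proof (cases "fst p = snd p")
      case True then show ?thesis by (simp add: Gz_def)
    next
      case ne: False
      have inner: "(\<Sum>r\<in>?S. Gz w p r * Gz w p' r) =
          ?c * w p * ((if p' = p then w p' else 0) + (if p' = (snd p, fst p) then w p' else 0))"
        if p': "p' \<in> I \<times> I" for p'
      proof (cases "fst p' = snd p'")
        case True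
        then have "p' \<noteq> p" "p' \<noteq> (snd p, fst p)" using ne by auto
        then show ?thesis using True by (simp add: Gz_def)
      next
        case False
        have "(\<Sum>r\<in>?S. Gz w p r * Gz w p' r) = w p * w p' * (\<Sum>r\<in>?S. r (fst p) * r (snd p) * (r (fst p') * r (snd p')))"
          using ne False by (simp add: Gz_def sum_distrib_left mult_ac)
        also have "\<dots> = w p * w p' * (?c * ((if fst p = fst p' \<and> snd p = snd p' then 1 else 0) + (if fst p = snd p' \<and> snd p = fst p' then 1 else 0)))"
          using sign4[OF fin, of "fst p" "snd p" "fst p'" "snd p'"] p p' ne False by auto
        also have "\<dots> = ?c * w p * ((if p' = p then w p' else 0) + (if p' = (snd p, fst p) then w p' else 0))"
        proof -
          have e1: "(fst p = fst p' \<and> snd p = snd p') = (p' = p)" by (auto simp: prod_eq_iff)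
          have e2: "(fst p = snd p' \<and> snd p = fst p') = (p' = (snd p, fst p))" by (auto simp: prod_eq_iff)
          show ?thesis unfolding e1 e2
            by (cases "p' = p"; cases "p' = (snd p, fst p)") (simp_all add: algebra_simps)
        qed
        finally show ?thesis .
      qed
      have "(\<Sum>p'\<in>I \<times> I. \<Sum>r\<in>?S. Gz w p r * Gz w p' r) =
          (\<Sum>p'\<in>I \<times> I. ?c * w p * ((if p' = p then w p' else 0) + (if p' = (snd p, fst p) then w p' else 0)))"
        using inner by (rule sum.cong[OF refl])
      also have "\<dots> = ?c * w p * ((\<Sum>p'\<in>I \<times> I. if p' = p then w p' else 0) + (\<Sum>p'\<in>I \<times> I. if p' = (snd p, fst p) then w p' else 0))"
        by (simp add: sum_distrib_left[symmetric] sum.distrib)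
      also have "\<dots> = ?c * w p * (w p + w (snd p, fst p))"
        using p fin by (cases p) (simp add: sum.delta')
      finally show ?thesis using ne by simp
    qed
  qed
  also have "\<dots> = ?c * (\<Sum>p\<in>I \<times> I. if fst p = snd p then 0 else w p * (w p + w (snd p, fst p)))"
    unfolding sum_distrib_left by (rule sum.cong[OF refl]) simp
  finally show ?thesis .
qed

definition wgt :: "(nat \<Rightarrow> real) \<Rightarrow> (nat \<Rightarrow> real) \<Rightarrow> (nat \<Rightarrow> nat) \<Rightarrow> nat \<times> nat \<Rightarrow> real" where
  "wgt x1 x2 h p = x1 (fst p) * x2 (snd p) * (if h (fst p) = h (snd p) then 1 else 0)"

lemma decomp:
  fixes x1 x2 :: "nat \<Rightarrow> real" and m :: nat
  assumes fin: "finite I" and h: "h \<in> PiE I (\<lambda>_. {1..m})" and r: "r \<in> PiE I (\<lambda>_. {-1,1::real})"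
  shows "(\<Sum>q\<in>{1..m}. (\<Sum>i\<in>I. x1 i * r i * (if h i = q then 1 else 0)) * (\<Sum>i\<in>I. x2 i * r i * (if h i = q then 1 else 0)))
    = (\<Sum>i\<in>I. x1 i * x2 i) + (\<Sum>p\<in>I \<times> I. Gz (wgt x1 x2 h) p r)"
proof -
  let ?F = "\<lambda>i j. x1 i * x2 j * r i * r j * (if h i = h j then 1 else 0)"
  have "(\<Sum>q\<in>{1..m}. (\<Sum>i\<in>I. x1 i * r i * (if h i = q then 1 else 0)) * (\<Sum>i\<in>I. x2 i * r i * (if h i = q then 1 else 0)))
     = (\<Sum>q\<in>{1..m}. \<Sum>i\<in>I. \<Sum>j\<in>I. (x1 i * r i * (if h i = q then 1 else 0)) * (x2 j * r j * (if h j = q then 1 else 0)))"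
    by (simp add: sum_product)
  also have "\<dots> = (\<Sum>i\<in>I. \<Sum>q\<in>{1..m}. \<Sum>j\<in>I. (x1 i * r i * (if h i = q then 1 else 0)) * (x2 j * r j * (if h j = q then 1 else 0)))"
    by (rule sum.swap)
  also have "\<dots> = (\<Sum>i\<in>I. \<Sum>j\<in>I. \<Sum>q\<in>{1..m}. (x1 i * r i * (if h i = q then 1 else 0)) * (x2 j * r j * (if h j = q then 1 else 0)))"
    by (rule sum.cong[OF refl], rule sum.swap)
  also have "\<dots> = (\<Sum>i\<in>I. \<Sum>j\<in>I. ?F i j)"
  proof (intro sum.cong[OF refl])
    fix i j assume i: "i \<in> I" and j: "j \<in> I"
    have hi: "h i \<in> {1..m}" using h i by auto
    have "(\<Sum>q\<in>{1..m}. (x1 i * r i * (if h i = q then 1 else 0)) * (x2 j * r j * (if h j = q then 1 else 0)))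
        = (\<Sum>q\<in>{1..m}. if q = h i then ?F i j else 0)"
      by (rule sum.cong[OF refl]) auto
    also have "\<dots> = ?F i j" using hi by (simp add: sum.delta')
    finally show "(\<Sum>q\<in>{1..m}. (x1 i * r i * (if h i = q then 1 else 0)) * (x2 j * r j * (if h j = q then 1 else 0))) = ?F i j" .
  qed
  also have "\<dots> = (\<Sum>i\<in>I. x1 i * x2 i + (\<Sum>j\<in>I. if i = j then 0 else ?F i j))"
  proof (rule sum.cong[OF refl])
    fix i assume i: "i \<in> I"
    have "(\<Sum>j\<in>I. ?F i j) = (\<Sum>j\<in>I. (if i = j then ?F i j else 0) + (if i = j then 0 else ?F i j))"
      by (rule sum.cong) auto
    also have "\<dots> = ?F i i + (\<Sum>j\<in>I. if i = j then 0 else ?F i j)"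
      using fin i by (simp add: sum.distrib sum.delta)
    also have "?F i i = x1 i * x2 i" using sq_sign[OF r i] by (simp add: mult_ac)
    finally show "(\<Sum>j\<in>I. ?F i j) = x1 i * x2 i + (\<Sum>j\<in>I. if i = j then 0 else ?F i j)" .
  qed
  also have "\<dots> = (\<Sum>i\<in>I. x1 i * x2 i) + (\<Sum>i\<in>I. \<Sum>j\<in>I. Gz (wgt x1 x2 h) (i, j) r)"
  proof -
    have "(if i = j then 0 else ?F i j) = Gz (wgt x1 x2 h) (i, j) r" for i j
      unfolding Gz_def wgt_def by (simp add: mult_ac)
    then show ?thesis by (simp add: sum.distrib)
  qed
  also have "(\<Sum>i\<in>I. \<Sum>j\<in>I. Gz (wgt x1 x2 h) (i, j) r) = (\<Sum>p\<in>I \<times> I. Gz (wgt x1 x2 h) p r)"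
    by (simp add: sum.cartesian_product)
  finally show ?thesis .
qed

lemma hpair':
  fixes m :: nat
  assumes fin: "finite I" and I: "i \<in> I" "j \<in> I" and ne: "i \<noteq> j" and m: "m \<ge> 1"
  shows "(\<Sum>h\<in>PiE I (\<lambda>_. {1..m}). (if h i = h j then 1 else 0::real)) = real (card (PiE I (\<lambda>_. {1..m}))) / real m"
proof -
  have c: "card I \<ge> 1" using fin I by (metis One_nat_def Suc_leI card_gt_0_iff empty_iff)
  have "real (card (PiE I (\<lambda>_. {1..m}))) = real m ^ card I" using fin by (simp add: card_PiE)
  also have "\<dots> = real m * real m ^ (card I - 1)" using c by (metis Suc_diff_le diff_Suc_1 power_Suc)
  finally show ?thesis using hpair[OF fin I ne] m by simp
qed

definition Tg :: "nat set \<Rightarrow> nat \<Rightarrow> (nat \<Rightarrow> real) \<Rightarrow> (nat \<Rightarrow> real) \<Rightarrow> (nat \<Rightarrow> nat) \<Rightarrow> (nat \<Rightarrow> real) \<Rightarrow> real" where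
  "Tg I m x1 x2 h r = (\<Sum>q\<in>{1..m}. (\<Sum>i\<in>I. x1 i * r i * (if h i = q then 1 else 0)) * (\<Sum>i\<in>I. x2 i * r i * (if h i = q then 1 else 0)))"

lemma hr_mom1:
  assumes fin: "finite I"
  shows "(\<Sum>h\<in>PiE I (\<lambda>_. {1..m}). \<Sum>r\<in>PiE I (\<lambda>_. {-1,1::real}). Tg I m x1 x2 h r)
     = real (card (PiE I (\<lambda>_. {1..m}))) * real (card (PiE I (\<lambda>_. {-1,1::real}))) * (\<Sum>i\<in>I. x1 i * x2 i)"
proof -
  have "(\<Sum>r\<in>PiE I (\<lambda>_. {-1,1::real}). Tg I m x1 x2 h r) = real (card (PiE I (\<lambda>_. {-1,1::real}))) * (\<Sum>i\<in>I. x1 i * x2 i)"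
    if h: "h \<in> PiE I (\<lambda>_. {1..m})" for h
  proof -
    have "(\<Sum>r\<in>PiE I (\<lambda>_. {-1,1::real}). Tg I m x1 x2 h r) =
        (\<Sum>r\<in>PiE I (\<lambda>_. {-1,1::real}). (\<Sum>i\<in>I. x1 i * x2 i) + (\<Sum>p\<in>I \<times> I. Gz (wgt x1 x2 h) p r))"
      unfolding Tg_def by (rule sum.cong[OF refl], rule decomp[OF fin h])
    also have "\<dots> = real (card (PiE I (\<lambda>_. {-1,1::real}))) * (\<Sum>i\<in>I. x1 i * x2 i)"
      by (simp add: sum.distrib Zr1[OF fin])
    finally show ?thesis .
  qed
  then show ?thesis by (simp add: sum_distrib_right)
qed

lemma hr_mom2:
  assumes fin: "finite I" and m: "m \<ge> 1"
  shows "(\<Sum>h\<in>PiE I (\<lambda>_. {1..m}). \<Sum>r\<in>PiE I (\<lambda>_. {-1,1::real}). (Tg I m x1 x2 h r)^2)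
     = real (card (PiE I (\<lambda>_. {1..m}))) * real (card (PiE I (\<lambda>_. {-1,1::real}))) *
       ((\<Sum>i\<in>I. x1 i * x2 i)^2 + (\<Sum>p\<in>I \<times> I. if fst p = snd p then 0 else
            x1 (fst p) * x2 (snd p) * (x1 (fst p) * x2 (snd p) + x1 (snd p) * x2 (fst p))) / real m)"
proof -
  let ?H = "PiE I (\<lambda>_. {1..m})" and ?S = "PiE I (\<lambda>_. {-1,1::real})"
  let ?a = "\<Sum>i\<in>I. x1 i * x2 i"
  let ?e = "\<lambda>p. x1 (fst p) * x2 (snd p) * (x1 (fst p) * x2 (snd p) + x1 (snd p) * x2 (fst p))"
  let ?hh = "\<lambda>h p. (if h (fst p) = h (snd p) then 1 else 0::real)"
  have step: "(\<Sum>r\<in>?S. (Tg I m x1 x2 h r)^2) = real (card ?S) * (?a^2 + (\<Sum>p\<in>I \<times> I. if fst p = snd p then 0 else ?e p * ?hh h p))"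
    if h: "h \<in> ?H" for h
  proof -
    let ?Z = "\<lambda>r. \<Sum>p\<in>I \<times> I. Gz (wgt x1 x2 h) p r"
    have "(\<Sum>r\<in>?S. (Tg I m x1 x2 h r)^2) = (\<Sum>r\<in>?S. ?a^2 + 2 * ?a * ?Z r + (?Z r)^2)"
    proof (rule sum.cong[OF refl])
      fix r assume r: "r \<in> ?S"
      have "Tg I m x1 x2 h r = ?a + ?Z r" unfolding Tg_def by (rule decomp[OF fin h r])
      then show "(Tg I m x1 x2 h r)^2 = ?a^2 + 2 * ?a * ?Z r + (?Z r)^2" by (simp add: power2_eq_square algebra_simps)
    qed
    also have "\<dots> = real (card ?S) * ?a^2 + 2 * ?a * (\<Sum>r\<in>?S. ?Z r) + (\<Sum>r\<in>?S. (?Z r)^2)"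
      by (simp add: sum.distrib sum_distrib_left)
    also have "(\<Sum>r\<in>?S. ?Z r) = 0" by (rule Zr1[OF fin])
    also have "(\<Sum>r\<in>?S. (?Z r)^2) = real (card ?S) * (\<Sum>p\<in>I \<times> I. if fst p = snd p then 0 else wgt x1 x2 h p * (wgt x1 x2 h p + wgt x1 x2 h (snd p, fst p)))"
      by (rule Zr2[OF fin])
    also have "(\<Sum>p\<in>I \<times> I. if fst p = snd p then 0 else wgt x1 x2 h p * (wgt x1 x2 h p + wgt x1 x2 h (snd p, fst p)))
        = (\<Sum>p\<in>I \<times> I. if fst p = snd p then 0 else ?e p * ?hh h p)"
      by (rule sum.cong[OF refl]) (auto simp: wgt_def algebra_simps)
    finally show ?thesis by (simp add: algebra_simps)
  qed
  have "(\<Sum>h\<in>?H. \<Sum>r\<in>?S. (Tg I m x1 x2 h r)^2) = (\<Sum>h\<in>?H. real (card ?S) * (?a^2 + (\<Sum>p\<in>I \<times> I. if fst p = snd p then 0 else ?e p * ?hh h p)))"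
    using step by (rule sum.cong[OF refl])
  also have "\<dots> = real (card ?S) * (real (card ?H) * ?a^2 + (\<Sum>p\<in>I \<times> I. \<Sum>h\<in>?H. if fst p = snd p then 0 else ?e p * ?hh h p))"
    apply (simp add: sum_distrib_left[symmetric] sum.distrib)
    apply (rule disjI2)
    apply (rule sum.swap)
    done
  also have "(\<Sum>p\<in>I \<times> I. \<Sum>h\<in>?H. if fst p = snd p then 0 else ?e p * ?hh h p)
      = (\<Sum>p\<in>I \<times> I. if fst p = snd p then 0 else ?e p * (real (card ?H) / real m))"
  proof (rule sum.cong[OF refl])
    fix p assume p: "p \<in> I \<times> I"
    show "(\<Sum>h\<in>?H. if fst p = snd p then 0 else ?e p * ?hh h p) = (if fst p = snd p then 0 else ?e p * (real (card ?H) / real m))"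
    proof (cases "fst p = snd p")
      case False
      then show ?thesis using hpair'[OF fin _ _ False m] p by (auto simp: sum_distrib_left[symmetric])
    qed simp
  qed
  also have "\<dots> = real (card ?H) * ((\<Sum>p\<in>I \<times> I. if fst p = snd p then 0 else ?e p) / real m)"
    unfolding sum_divide_distrib sum_distrib_left by (rule sum.cong[OF refl]) simp
  finally show ?thesis by (simp add: algebra_simps)
qed



lemma marg1:
  fixes e :: "'a \<Rightarrow> real"
  assumes fin: "finite K" "finite A" and A: "A \<noteq> {}" and j: "j \<in> K"
  shows "(\<Sum>ps\<in>PiE K (\<lambda>_. A). e (ps j)) = real (card (PiE K (\<lambda>_. A))) * ((\<Sum>a\<in>A. e a) / real (card A))"
proof -
  let ?g = "\<lambda>l v. if l = j then e v else 1::real"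
  have "(\<Sum>ps\<in>PiE K (\<lambda>_. A). e (ps j)) = (\<Sum>ps\<in>PiE K (\<lambda>_. A). \<Prod>l\<in>K. ?g l (ps l))"
  proof (rule sum.cong[OF refl])
    fix ps show "e (ps j) = (\<Prod>l\<in>K. ?g l (ps l))"
      using fin j by (simp add: prod.remove[OF fin(1) j])
  qed
  also have "\<dots> = (\<Prod>l\<in>K. \<Sum>v\<in>A. ?g l v)" by (rule prod_sum_PiE[symmetric]) (use fin in auto)
  also have "\<dots> = (\<Sum>a\<in>A. e a) * (\<Prod>l\<in>K - {j}. real (card A))"
    by (simp add: prod.remove[OF fin(1) j])
  also have "\<dots> = (\<Sum>a\<in>A. e a) * real (card A) ^ (card K - 1)" using fin j by simp
  also have "\<dots> = real (card (PiE K (\<lambda>_. A))) * ((\<Sum>a\<in>A. e a) / real (card A))"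
  proof -
    have cA: "real (card A) > 0" using fin A by (simp add: card_gt_0_iff)
    have "card K > 0" using fin j by (auto simp: card_gt_0_iff)
    then have cK: "card K = Suc (card K - 1)" by simp
    have "real (card (PiE K (\<lambda>_. A))) = real (card A) ^ card K" using fin by (simp add: card_PiE)
    also have "\<dots> = real (card A) * real (card A) ^ (card K - 1)" by (subst cK) simp
    finally show ?thesis using cA by (simp add: field_simps)
  qed
  finally show ?thesis .
qed

lemma marg2:
  fixes e :: "'a \<Rightarrow> real"
  assumes fin: "finite K" "finite A" and A: "A \<noteq> {}" and j: "j \<in> K" "j' \<in> K" and ne: "j \<noteq> j'"
  shows "(\<Sum>ps\<in>PiE K (\<lambda>_. A). e (ps j) * e (ps j')) = real (card (PiE K (\<lambda>_. A))) * ((\<Sum>a\<in>A. e a) / real (card A))^2"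
proof -
  let ?g = "\<lambda>l v. if l = j \<or> l = j' then e v else 1::real"
  have j2: "j' \<in> K - {j}" using j ne by auto
  have "(\<Sum>ps\<in>PiE K (\<lambda>_. A). e (ps j) * e (ps j')) = (\<Sum>ps\<in>PiE K (\<lambda>_. A). \<Prod>l\<in>K. ?g l (ps l))"
  proof (rule sum.cong[OF refl])
    fix ps have "(\<Prod>l\<in>K. ?g l (ps l)) = e (ps j) * (\<Prod>l\<in>K - {j}. ?g l (ps l))"
      by (simp add: prod.remove[OF fin(1) j(1)])
    also have "(\<Prod>l\<in>K - {j}. ?g l (ps l)) = e (ps j') * (\<Prod>l\<in>K - {j} - {j'}. ?g l (ps l))"
      using fin j2 ne by (simp add: prod.remove[OF _ j2])
    also have "(\<Prod>l\<in>K - {j} - {j'}. ?g l (ps l)) = 1" by (rule prod.neutral) auto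
    finally show "e (ps j) * e (ps j') = (\<Prod>l\<in>K. ?g l (ps l))" by simp
  qed
  also have "\<dots> = (\<Prod>l\<in>K. \<Sum>v\<in>A. ?g l v)" by (rule prod_sum_PiE[symmetric]) (use fin in auto)
  also have "\<dots> = (\<Sum>a\<in>A. e a) * (\<Prod>l\<in>K - {j}. \<Sum>v\<in>A. ?g l v)"
    by (simp add: prod.remove[OF fin(1) j(1)])
  also have "(\<Prod>l\<in>K - {j}. \<Sum>v\<in>A. ?g l v) = (\<Sum>a\<in>A. e a) * (\<Prod>l\<in>K - {j} - {j'}. \<Sum>v\<in>A. ?g l v)"
    using fin ne by (simp add: prod.remove[OF _ j2])
  also have "(\<Prod>l\<in>K - {j} - {j'}. \<Sum>v\<in>A. ?g l v) = real (card A) ^ (card K - 2)"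
    using fin j ne by (simp add: card_Diff_subset numeral_2_eq_2)
  finally have eq: "(\<Sum>ps\<in>PiE K (\<lambda>_. A). e (ps j) * e (ps j')) = (\<Sum>a\<in>A. e a)^2 * real (card A) ^ (card K - 2)"
    by (simp add: power2_eq_square)
  have cA: "real (card A) > 0" using fin A by (simp add: card_gt_0_iff)
  have "card K \<ge> 2" using fin j ne
    by (metis card_2_iff card_mono empty_subsetI insert_subset)
  then have cK: "card K = Suc (Suc (card K - 2))" by simp
  have "real (card (PiE K (\<lambda>_. A))) = real (card A) ^ card K" using fin by (simp add: card_PiE)
  also have "\<dots> = real (card A)^2 * real (card A) ^ (card K - 2)" by (subst cK) (simp add: power2_eq_square)
  finally show ?thesis using cA eq by (simp add: field_simps)
qed

lemma block_sum:
  fixes f :: "nat \<Rightarrow> real"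
  assumes N: "0 < N"
  shows "(\<Sum>i<N*k. f i) = (\<Sum>j<k. \<Sum>t<N. f (j*N+t))"
proof -
  have "(\<Sum>j<k. \<Sum>t<N. f (j*N+t)) = (\<Sum>(j,t)\<in>{..<k} \<times> {..<N}. f (j*N+t))"
    by (simp add: sum.cartesian_product)
  also have "\<dots> = (\<Sum>i<N*k. f i)"
  proof (rule sum.reindex_bij_witness[where i="\<lambda>i. (i div N, i mod N)" and j="\<lambda>(j,t). j*N+t"])
    fix a assume "a \<in> {..<k} \<times> {..<N}"
    then obtain j t where a: "a = (j,t)" "j < k" "t < N" by auto
    show "((\<lambda>(j,t). j*N+t) a div N, (\<lambda>(j,t). j*N+t) a mod N) = a" using a N by auto
    have "j*N+t < j*N + N" using a by simp
    also have "\<dots> = (j+1)*N" by simp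
    also have "\<dots> \<le> k*N" using a by (intro mult_right_mono) auto
    finally show "(\<lambda>(j,t). j*N+t) a \<in> {..<N*k}" by (simp add: a mult.commute)
  next
    fix b assume b: "b \<in> {..<N*k}"
    show "(\<lambda>(j,t). j*N+t) (b div N, b mod N) = b" by simp
    show "(b div N, b mod N) \<in> {..<k} \<times> {..<N}" using b N
      by (auto simp: less_mult_imp_div_less mult.commute)
  qed (auto)
  finally show ?thesis by simp
qed



definition ee :: "nat \<Rightarrow> nat set \<Rightarrow> nat set \<Rightarrow> (nat \<Rightarrow> nat) \<Rightarrow> real" where
  "ee b S1 S2 p = (if bbit b S1 p = bbit b S2 p then 1 else 0)"

lemma bbit_lt: "bbit b S p < 2 ^ b" by (simp add: bbit_def)

lemma xvec_blk: "t < 2 ^ b \<Longrightarrow> xvec b S ps (j * 2 ^ b + t) = (if bbit b S (ps j) = t then 1 else 0)"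
  by (simp add: xvec_def)

lemma x01: "xvec b S ps i * xvec b S ps i = xvec b S ps i"
  by (simp add: xvec_def)

lemma xsum: "(\<Sum>i<2 ^ b * k. xvec b S ps i) = real k"
proof -
  have "(\<Sum>i<2 ^ b * k. xvec b S ps i) = (\<Sum>j<k. \<Sum>t<2 ^ b. xvec b S ps (j * 2 ^ b + t))"
    by (rule block_sum) simp
  also have "\<dots> = (\<Sum>j<k. \<Sum>t<2 ^ b. if bbit b S (ps j) = t then 1 else 0)"
    by (intro sum.cong refl) (simp add: xvec_blk)
  also have "\<dots> = (\<Sum>j<k. 1)" using bbit_lt by (intro sum.cong refl) (simp add: sum.delta)
  finally show ?thesis by simp
qed

lemma xdot: "(\<Sum>i<2 ^ b * k. xvec b S1 ps i * xvec b S2 ps i) = (\<Sum>j<k. ee b S1 S2 (ps j))"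
proof -
  have "(\<Sum>i<2 ^ b * k. xvec b S1 ps i * xvec b S2 ps i) = (\<Sum>j<k. \<Sum>t<2 ^ b. xvec b S1 ps (j * 2 ^ b + t) * xvec b S2 ps (j * 2 ^ b + t))"
    by (rule block_sum) simp
  also have "\<dots> = (\<Sum>j<k. \<Sum>t<2 ^ b. if t = bbit b S1 (ps j) then ee b S1 S2 (ps j) else 0)"
    by (intro sum.cong refl) (auto simp: xvec_blk ee_def)
  also have "\<dots> = (\<Sum>j<k. ee b S1 S2 (ps j))" using bbit_lt by (intro sum.cong refl) (simp add: sum.delta)
  finally show ?thesis .
qed

lemma offdiag:
  fixes x1 x2 :: "nat \<Rightarrow> real"
  assumes fin: "finite I" and b1: "\<And>i. x1 i * x1 i = x1 i" and b2: "\<And>i. x2 i * x2 i = x2 i"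
  shows "(\<Sum>p\<in>I \<times> I. if fst p = snd p then 0 else
            x1 (fst p) * x2 (snd p) * (x1 (fst p) * x2 (snd p) + x1 (snd p) * x2 (fst p)))
       = (\<Sum>i\<in>I. x1 i) * (\<Sum>i\<in>I. x2 i) + (\<Sum>i\<in>I. x1 i * x2 i)^2 - 2 * (\<Sum>i\<in>I. x1 i * x2 i)"
proof -
  let ?E = "\<lambda>i j. x1 i * x2 j * (x1 i * x2 j + x1 j * x2 i)"
  have E: "?E i j = x1 i * x2 j + (x1 i * x2 i) * (x1 j * x2 j)" for i j
  proof -
    have "?E i j = (x1 i * x1 i) * (x2 j * x2 j) + (x1 i * x2 i) * (x1 j * x2 j)" by (simp add: algebra_simps)
    then show ?thesis by (simp add: b1 b2)
  qed
  have "(\<Sum>p\<in>I \<times> I. if fst p = snd p then 0 else ?E (fst p) (snd p))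
      = (\<Sum>i\<in>I. \<Sum>j\<in>I. if i = j then 0 else ?E i j)"
    by (simp add: sum.cartesian_product split_def)
  also have "\<dots> = (\<Sum>i\<in>I. (\<Sum>j\<in>I. ?E i j) - ?E i i)"
  proof (rule sum.cong[OF refl])
    fix i assume i: "i \<in> I"
    have "(\<Sum>j\<in>I. ?E i j) = (\<Sum>j\<in>I. (if i = j then ?E i j else 0) + (if i = j then 0 else ?E i j))"
      by (rule sum.cong) auto
    also have "\<dots> = ?E i i + (\<Sum>j\<in>I. if i = j then 0 else ?E i j)"
      using fin i by (simp add: sum.distrib sum.delta)
    finally show "(\<Sum>j\<in>I. if i = j then 0 else ?E i j) = (\<Sum>j\<in>I. ?E i j) - ?E i i" by simp
  qed
  also have "\<dots> = (\<Sum>i\<in>I. \<Sum>j\<in>I. x1 i * x2 j + (x1 i * x2 i) * (x1 j * x2 j)) - (\<Sum>i\<in>I. 2 * (x1 i * x2 i))"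
  proof -
    have E2: "?E i i = 2 * (x1 i * x2 i)" for i
    proof -
      have "?E i i = 2 * ((x1 i * x1 i) * (x2 i * x2 i))" by (simp add: algebra_simps)
      then show ?thesis by (simp add: b1 b2)
    qed
    show ?thesis unfolding sum_subtractf E2 unfolding E ..
  qed
  also have "\<dots> = (\<Sum>i\<in>I. x1 i) * (\<Sum>i\<in>I. x2 i) + (\<Sum>i\<in>I. x1 i * x2 i)^2 - 2 * (\<Sum>i\<in>I. x1 i * x2 i)"
    by (simp add: sum.distrib sum_product power2_eq_square sum_distrib_left[symmetric])
  finally show ?thesis .
qed



lemma sum3: "(\<Sum>\<omega>\<in>A \<times> B \<times> C. f \<omega>) = (\<Sum>a\<in>A. \<Sum>b\<in>B. \<Sum>c\<in>C. f (a, b, c))"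
  by (simp add: sum.cartesian_product split_def)

lemma perm_fin: "finite (perm_set D)" "perm_set D \<noteq> {}"
  unfolding perm_set_def using finite_permutations[of "{..<D}"] permutes_id[of "{..<D}"] by blast+

lemma Pb_sum: "Pb D b S1 S2 = (\<Sum>a\<in>perm_set D. ee b S1 S2 a) / real (card (perm_set D))"
proof -
  have "(\<Sum>a\<in>perm_set D. ee b S1 S2 a) = real (card (perm_set D \<inter> {p. bbit b S1 p = bbit b S2 p}))"
    unfolding ee_def using perm_fin by (simp add: sum.If_cases Int_def)
  then show ?thesis unfolding Pb_def using perm_fin by (simp add: measure_pmf_of_set)
qed

lemma permM1:
  "(\<Sum>ps\<in>PiE {..<k} (\<lambda>_. perm_set D). \<Sum>j<k. ee b S1 S2 (ps j))
    = real (card (PiE {..<k} (\<lambda>_. perm_set D))) * real k * Pb D b S1 S2"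
proof -
  have "(\<Sum>ps\<in>PiE {..<k} (\<lambda>_. perm_set D). \<Sum>j<k. ee b S1 S2 (ps j))
      = (\<Sum>j<k. \<Sum>ps\<in>PiE {..<k} (\<lambda>_. perm_set D). ee b S1 S2 (ps j))" by (rule sum.swap)
  also have "\<dots> = (\<Sum>j<k. real (card (PiE {..<k} (\<lambda>_. perm_set D))) * Pb D b S1 S2)"
    by (intro sum.cong refl) (simp add: marg1 perm_fin Pb_sum)
  finally show ?thesis by simp
qed

lemma permM2:
  "(\<Sum>ps\<in>PiE {..<k} (\<lambda>_. perm_set D). (\<Sum>j<k. ee b S1 S2 (ps j))^2)
    = real (card (PiE {..<k} (\<lambda>_. perm_set D))) * (real k * Pb D b S1 S2 + real k * (real k - 1) * Pb D b S1 S2 ^ 2)"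
proof -
  let ?P = "PiE {..<k} (\<lambda>_. perm_set D)" and ?p = "Pb D b S1 S2"
  let ?X = "real (card ?P) * ?p" and ?Y = "real (card ?P) * ?p^2"
  have "(\<Sum>ps\<in>?P. (\<Sum>j<k. ee b S1 S2 (ps j))^2) = (\<Sum>ps\<in>?P. \<Sum>j<k. \<Sum>j'<k. ee b S1 S2 (ps j) * ee b S1 S2 (ps j'))"
    by (simp add: power2_eq_square sum_product)
  also have "\<dots> = (\<Sum>j<k. \<Sum>ps\<in>?P. \<Sum>j'<k. ee b S1 S2 (ps j) * ee b S1 S2 (ps j'))" by (rule sum.swap)
  also have "\<dots> = (\<Sum>j<k. \<Sum>j'<k. \<Sum>ps\<in>?P. ee b S1 S2 (ps j) * ee b S1 S2 (ps j'))"
    by (intro sum.cong refl sum.swap)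
  also have "\<dots> = (\<Sum>j<k. \<Sum>j'<k. ?Y + (if j = j' then ?X - ?Y else 0))"
  proof (intro sum.cong refl)
    fix j j' assume j: "j \<in> {..<k}" and j': "j' \<in> {..<k}"
    show "(\<Sum>ps\<in>?P. ee b S1 S2 (ps j) * ee b S1 S2 (ps j')) = ?Y + (if j = j' then ?X - ?Y else 0)"
    proof (cases "j = j'")
      case True
      have "(\<Sum>ps\<in>?P. ee b S1 S2 (ps j) * ee b S1 S2 (ps j')) = (\<Sum>ps\<in>?P. ee b S1 S2 (ps j))"
        using True by (intro sum.cong refl) (simp add: ee_def)
      also have "\<dots> = ?X" using j by (simp add: marg1 perm_fin Pb_sum)
      finally show ?thesis using True by simp
    next
      case False
      then show ?thesis using j j' by (simp add: marg2 perm_fin Pb_sum)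
    qed
  qed
  also have "\<dots> = (\<Sum>j<k. real k * ?Y + (?X - ?Y))"
    by (intro sum.cong refl) (simp add: sum.distrib sum.delta)
  also have "\<dots> = real (card ?P) * (real k * ?p + real k * (real k - 1) * ?p ^ 2)"
    by (simp add: algebra_simps power2_eq_square)
  finally show ?thesis .
qed



lemma That_Tg: "That_vw b k m S1 S2 (ps, h, r) = Tg {..<2 ^ b * k} m (xvec b S1 ps) (xvec b S2 ps) h r"
  by (simp add: That_vw_def Tg_def gvw_def)

lemma perps1:
  "(\<Sum>h\<in>PiE {..<2 ^ b * k} (\<lambda>_. {1..m}). \<Sum>r\<in>PiE {..<2 ^ b * k} (\<lambda>_. {-1,1::real}). That_vw b k m S1 S2 (ps, h, r))
   = real (card (PiE {..<2 ^ b * k} (\<lambda>_. {1..m}))) * real (card (PiE {..<2 ^ b * k} (\<lambda>_. {-1,1::real}))) * (\<Sum>j<k. ee b S1 S2 (ps j))"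
  unfolding That_Tg hr_mom1[OF finite_lessThan] xdot ..

lemma perps2:
  assumes m: "m \<ge> 1"
  shows "(\<Sum>h\<in>PiE {..<2 ^ b * k} (\<lambda>_. {1..m}). \<Sum>r\<in>PiE {..<2 ^ b * k} (\<lambda>_. {-1,1::real}). (That_vw b k m S1 S2 (ps, h, r))^2)
   = real (card (PiE {..<2 ^ b * k} (\<lambda>_. {1..m}))) * real (card (PiE {..<2 ^ b * k} (\<lambda>_. {-1,1::real}))) *
     ((\<Sum>j<k. ee b S1 S2 (ps j))^2 + (real k * real k + (\<Sum>j<k. ee b S1 S2 (ps j))^2 - 2 * (\<Sum>j<k. ee b S1 S2 (ps j))) / real m)"
  unfolding That_Tg hr_mom2[OF finite_lessThan m] unfolding offdiag[of "{..<2 ^ b * k}" "xvec b S1 ps" "xvec b S2 ps", OF finite_lessThan x01 x01] unfolding xsum xdot ..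

lemma aff_helper:
  fixes x k c p d :: real
  assumes k: "k > 0"
  shows "(x / k - c) / d = (p - c) / d + (x - k * p) / (k * d)"
proof -
  have e: "x / k - c = (p - c) + (x - k * p) / k" using k by (simp add: field_simps)
  have "(x / k - c) / d = ((p - c) + (x - k * p) / k) / d" by (simp only: e)
  also have "\<dots> = (p - c) / d + ((x - k * p) / k) / d" by (simp add: add_divide_distrib)
  finally show ?thesis by simp
qed

lemma final_alg:
  fixes cP cH cS k m p C2 :: real
  assumes "cP > 0" "cH > 0" "cS > 0" "k > 0" "m > 0" "C2 \<noteq> 1"
  shows "(cP * cH * cS * ((1 + 1 / m) * (k * p + k * (k - 1) * p^2) + (k * k - 2 * (k * p)) / m)
          - 2 * (k * p) * (cP * cH * cS * (k * p)) + cP * cH * cS * (k * p)^2) / (k * (1 - C2))^2 / (cP * cH * cS)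
     = 1 / k * (p * (1 - p)) / (1 - C2) ^ 2 + 1 / m * (1 / (1 - C2) ^ 2) * (1 + p ^ 2 - p * (1 + p) / k)"
proof -
  define d where "d = 1 - C2"
  have d: "d \<noteq> 0" using assms(6) unfolding d_def by simp
  show ?thesis unfolding d_def[symmetric] using assms(1-5) d
    by (simp add: field_simps power2_eq_square)
qed

theorem lemma2:
  fixes D b k m :: nat and S1 S2 :: "nat set"
  assumes "S1 \<subseteq> {..<D}" and "S2 \<subseteq> {..<D}" and "S1 \<noteq> {}" and "S2 \<noteq> {}"
    and "b \<ge> 1" and "k \<ge> 1" and "m \<ge> 1"
    and "Pb D b S1 S2 = C1b D b S1 S2 + (1 - C2b D b S1 S2) * resemblance S1 S2"
    and "C2b D b S1 S2 \<noteq> 1"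
  shows "measure_pmf.expectation (pmf_of_set (sample_space D b k m)) (Rhat_bvw D b k m S1 S2)
           = resemblance S1 S2
       \<and> measure_pmf.variance (pmf_of_set (sample_space D b k m)) (Rhat_bvw D b k m S1 S2)
           = 1 / real k * (Pb D b S1 S2 * (1 - Pb D b S1 S2)) / (1 - C2b D b S1 S2) ^ 2
             + 1 / real m * (1 / (1 - C2b D b S1 S2) ^ 2)
               * (1 + Pb D b S1 S2 ^ 2 - Pb D b S1 S2 * (1 + Pb D b S1 S2) / real k)"
proof -
  note m = assms(7)
  let ?P = "PiE {..<k} (\<lambda>_. perm_set D)"
  let ?H = "PiE {..<2 ^ b * k} (\<lambda>_. {1..m})"
  let ?S = "PiE {..<2 ^ b * k} (\<lambda>_. {-1,1::real})"
  let ?\<Omega> = "sample_space D b k m"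
  let ?T = "That_vw b k m S1 S2"
  let ?t = "\<lambda>ps. \<Sum>j<k. ee b S1 S2 (ps j)"
  define p where "p = Pb D b S1 S2"
  define C1 where "C1 = C1b D b S1 S2"
  define C2 where "C2 = C2b D b S1 S2"
  define R where "R = resemblance S1 S2"
  define cP where "cP = real (card ?P)"
  define cH where "cH = real (card ?H)"
  define cS where "cS = real (card ?S)"
  have \<Omega>: "?\<Omega> = ?P \<times> ?H \<times> ?S" by (simp add: sample_space_def)
  have finP: "finite ?P" using perm_fin by (simp add: finite_PiE)
  have finH: "finite ?H" by (simp add: finite_PiE)
  have finS: "finite ?S" by (simp add: finite_PiE)
  have neP: "?P \<noteq> {}" using perm_fin by (simp add: PiE_eq_empty_iff)
  have neH: "?H \<noteq> {}" using m by (simp add: PiE_eq_empty_iff)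
  have neS: "?S \<noteq> {}" by (simp add: PiE_eq_empty_iff)
  have finO: "finite ?\<Omega>" unfolding \<Omega> using finP finH finS by simp
  have neO: "?\<Omega> \<noteq> {}" unfolding \<Omega> using neP neH neS by simp
  have cP0: "cP > 0" unfolding cP_def using finP neP by (simp add: card_gt_0_iff)
  have cH0: "cH > 0" unfolding cH_def using finH neH by (simp add: card_gt_0_iff)
  have cS0: "cS > 0" unfolding cS_def using finS neS by (simp add: card_gt_0_iff)
  have N: "real (card ?\<Omega>) = cP * cH * cS" unfolding \<Omega> cP_def cH_def cS_def by (simp add: card_cartesian_product)
  have k0: "real k > 0" using assms(6) by simp
  have m0: "real m > 0" using m by simp
  have C2: "1 - C2 \<noteq> 0" using assms(9) unfolding C2_def by simp
  have Rp: "R = (p - C1) / (1 - C2)" using assms(8) C2 unfolding p_def C1_def C2_def R_def by (simp add: field_simps)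
  have S1: "(\<Sum>\<omega>\<in>?\<Omega>. ?T \<omega>) = cP * cH * cS * (real k * p)"
  proof -
    have "(\<Sum>\<omega>\<in>?\<Omega>. ?T \<omega>) = (\<Sum>ps\<in>?P. cH * cS * ?t ps)"
      unfolding \<Omega> sum3 perps1 cH_def cS_def ..
    also have "\<dots> = cH * cS * (cP * real k * p)"
      by (simp add: sum_distrib_left[symmetric] permM1 cP_def p_def)
    finally show ?thesis by (simp add: algebra_simps)
  qed
  have S2: "(\<Sum>\<omega>\<in>?\<Omega>. (?T \<omega>)^2) = cP * cH * cS *
      ((1 + 1 / real m) * (real k * p + real k * (real k - 1) * p^2) + (real k * real k - 2 * (real k * p)) / real m)"
  proof -
    have "(\<Sum>\<omega>\<in>?\<Omega>. (?T \<omega>)^2) = (\<Sum>ps\<in>?P. cH * cS * ((?t ps)^2 + (real k * real k + (?t ps)^2 - 2 * ?t ps) / real m))"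
      unfolding \<Omega> sum3 perps2[OF m] cH_def cS_def ..
    also have "\<dots> = cH * cS * ((1 + 1 / real m) * (\<Sum>ps\<in>?P. (?t ps)^2) + cP * (real k * real k) / real m - 2 / real m * (\<Sum>ps\<in>?P. ?t ps))"
      by (simp add: sum_distrib_left[symmetric] sum.distrib sum_subtractf sum_divide_distrib[symmetric] cP_def algebra_simps)
        (use m0 in \<open>simp add: field_simps\<close>)
    also have "\<dots> = cP * cH * cS *
      ((1 + 1 / real m) * (real k * p + real k * (real k - 1) * p^2) + (real k * real k - 2 * (real k * p)) / real m)"
      unfolding permM2 permM1 cP_def[symmetric] p_def[symmetric] by (simp add: diff_divide_distrib algebra_simps)
    finally show ?thesis .
  qed
  have Rh: "Rhat_bvw D b k m S1 S2 \<omega> = R + (?T \<omega> - real k * p) / (real k * (1 - C2))" for \<omega>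
    unfolding Rhat_bvw_def Rp C1_def[symmetric] C2_def[symmetric] by (rule aff_helper[OF k0])
  have E: "measure_pmf.expectation (pmf_of_set ?\<Omega>) (Rhat_bvw D b k m S1 S2) = R"
  proof -
    have "measure_pmf.expectation (pmf_of_set ?\<Omega>) (Rhat_bvw D b k m S1 S2) = (\<Sum>\<omega>\<in>?\<Omega>. Rhat_bvw D b k m S1 S2 \<omega>) / real (card ?\<Omega>)"
      by (rule integral_pmf_of_set[OF neO finO])
    also have "(\<Sum>\<omega>\<in>?\<Omega>. Rhat_bvw D b k m S1 S2 \<omega>) = real (card ?\<Omega>) * R + ((\<Sum>\<omega>\<in>?\<Omega>. ?T \<omega>) - real (card ?\<Omega>) * (real k * p)) / (real k * (1 - C2))"
      unfolding Rh by (simp add: sum.distrib sum_divide_distrib[symmetric] sum_subtractf)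
    also have "\<dots> = real (card ?\<Omega>) * R" unfolding S1 N by simp
    finally show ?thesis using N cP0 cH0 cS0 by simp
  qed
  have V: "measure_pmf.variance (pmf_of_set ?\<Omega>) (Rhat_bvw D b k m S1 S2)
     = ((\<Sum>\<omega>\<in>?\<Omega>. (?T \<omega>)^2) - 2 * (real k * p) * (\<Sum>\<omega>\<in>?\<Omega>. ?T \<omega>) + real (card ?\<Omega>) * (real k * p)^2) / (real k * (1 - C2))^2 / real (card ?\<Omega>)"
  proof -
    have "measure_pmf.variance (pmf_of_set ?\<Omega>) (Rhat_bvw D b k m S1 S2) =
       (\<Sum>\<omega>\<in>?\<Omega>. (Rhat_bvw D b k m S1 S2 \<omega> - R)^2) / real (card ?\<Omega>)"
      unfolding E by (rule integral_pmf_of_set[OF neO finO])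
    also have "(\<Sum>\<omega>\<in>?\<Omega>. (Rhat_bvw D b k m S1 S2 \<omega> - R)^2) = (\<Sum>\<omega>\<in>?\<Omega>. ((?T \<omega>)^2 - 2 * (real k * p) * ?T \<omega> + (real k * p)^2) / (real k * (1 - C2))^2)"
      unfolding Rh by (intro sum.cong refl) (simp add: power2_eq_square field_simps)
    also have "\<dots> = ((\<Sum>\<omega>\<in>?\<Omega>. (?T \<omega>)^2) - 2 * (real k * p) * (\<Sum>\<omega>\<in>?\<Omega>. ?T \<omega>) + real (card ?\<Omega>) * (real k * p)^2) / (real k * (1 - C2))^2"
      by (simp add: sum_divide_distrib[symmetric] sum.distrib sum_subtractf sum_distrib_left)
    finally show ?thesis .
  qed
  show ?thesis
  proof
    show "measure_pmf.expectation (pmf_of_set ?\<Omega>) (Rhat_bvw D b k m S1 S2) = resemblance S1 S2"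
      using E unfolding R_def .
    show "measure_pmf.variance (pmf_of_set ?\<Omega>) (Rhat_bvw D b k m S1 S2)
           = 1 / real k * (Pb D b S1 S2 * (1 - Pb D b S1 S2)) / (1 - C2b D b S1 S2) ^ 2
             + 1 / real m * (1 / (1 - C2b D b S1 S2) ^ 2)
               * (1 + Pb D b S1 S2 ^ 2 - Pb D b S1 S2 * (1 + Pb D b S1 S2) / real k)"
      unfolding V S1 S2 N p_def[symmetric] C2_def[symmetric]
      by (rule final_alg[OF cP0 cH0 cS0 k0 m0]) (use C2 in simp)
  qed
qed


end
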